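(* In base $B=3$, for every $\eta\ge 2$, $$\gamma_3(\eta+1)=2\cdot 3^{\frac{\gamma_3(\eta)-1}{4}}-1,$$ where $\gamma_3(2)=13=(1,1,1)_3$ (so that $\gamma_3(3)=2\cdot3^3-1$).
   Context: Every integer $x>0$ is written uniquely in base $3$ as $x=\sum_{i} x_i 3^i$ with digits $x_i\in\{0,1,2\}$; $(x_{L-1},\dots,x_0)_3$ denotes $x$ by its digits. Define $\mathcal{H}_3(x)=\sum_{i} x_i^2$, $\mathcal{H}_3^0(x)=x$, $\mathcal{H}_3^n=\mathcal{H}_3\circ\mathcal{H}_3^{n-1}$. A positive integer $x$ is happy if $\mathcal{H}_3^n(x)=1$ for some $n\in\mathbb{N}$; its height is $\eta_3(x)=\min\{\alpha\in\mathbb{N}:\mathcal{H}_3^\alpha(x)=1\}$. For $n\in\mathbb{N}$, $\gamma_3(n)$ denotes the smallest happy number $x\ge1$ with $\eta_3(x)=n$. *)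

theory Defs
  imports Complex_Main
begin

fun H3 :: "nat \<Rightarrow> nat" where
  "H3 x = (if x = 0 then 0 else (x mod 3)^2 + H3 (x div 3))"

definition happy3 :: "nat \<Rightarrow> bool" where
  "happy3 x \<longleftrightarrow> x > 0 \<and> (\<exists>n. (H3 ^^ n) x = 1)"

definition eta3 :: "nat \<Rightarrow> nat" where
  "eta3 x = (LEAST \<alpha>. (H3 ^^ \<alpha>) x = 1)"

definition gamma3 :: "nat \<Rightarrow> nat" where
  "gamma3 n = (LEAST x. x \<ge> 1 \<and> happy3 x \<and> eta3 x = n)"

end

theory Submission
  imports Defs
begin

declare H3.simps[simp del]

lemma H3_0[simp]: "H3 0 = 0"
  by (subst H3.simps) simp

lemma H3_pos: "0 < x \<Longrightarrow> H3 x = (x mod 3)^2 + H3 (x div 3)"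
  by (subst H3.simps) simp

lemma H3_zero: "H3 x = 0 \<Longrightarrow> x = 0"
proof (induction x rule: H3.induct)
  case (1 x)
  show ?case
  proof (rule ccontr)
    assume "x \<noteq> 0"
    then have "(x mod 3)^2 + H3 (x div 3) = 0" using 1(2) H3_pos by simp
    then have "x mod 3 = 0" "H3 (x div 3) = 0" by auto
    then have "x div 3 = 0" using 1(1) \<open>x \<noteq> 0\<close> by simp
    with \<open>x mod 3 = 0\<close> \<open>x \<noteq> 0\<close> show False by presburger
  qed
qed

lemma H3_3m2: "H3 (3*m+2) = 4 + H3 m"
proof -
  have a: "(3*m+2) mod 3 = (2::nat)" "(3*m+2) div 3 = m" by presburger+
  show ?thesis using H3_pos[of "3*m+2"] unfolding a by simp
qed

lemma H3_1: "H3 1 = 1"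
  using H3_pos[of 1] by simp

lemma c_suc: "2*3^(Suc k) - 1 = 3*(2*3^k - 1) + (2::nat)"
proof -
  have "(1::nat) \<le> 3^k" by simp
  then obtain m where "3^k = m + (1::nat)" using le_Suc_ex by (metis add.commute)
  then show ?thesis by simp
qed

lemma H3_c: "H3 (2*3^k - 1) = 4*k+1"
proof (induction k)
  case 0
  have "H3 (Suc 0) = Suc 0" using H3_1 by simp
  then show ?case by simp
next
  case (Suc k)
  then show ?case by (simp only: c_suc H3_3m2) simp
qed

lemma mod4_aux: "a mod 4 = 1 \<Longrightarrow> (3*a+2) mod 4 = (1::nat)"
  by presburger

lemma c_mod4: "(2*3^k - 1) mod 4 = (1::nat)"
proof (induction k)
  case 0 then show ?case by simp
next
  case (Suc k)
  then show ?case by (simp only: c_suc mod4_aux)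
qed

lemma H3_le4: "(x mod 3)^2 \<le> (4::nat)"
proof -
  have "x mod 3 \<le> 2" by simp
  then have "(x mod 3)^2 \<le> 2^2" by (rule power_mono) simp
  then show ?thesis by simp
qed

lemma H3_lower: "0 < x \<Longrightarrow> 4*k+1 \<le> H3 x \<Longrightarrow> 2*3^k \<le> x+1"
proof (induction k arbitrary: x)
  case 0 then show ?case by simp
next
  case (Suc k)
  define q where "q = x div 3"
  define r where "r = x mod 3"
  have x: "x = 3*q + r" unfolding q_def r_def by simp
  have r3: "r < 3" unfolding r_def by simp
  have h: "H3 x = r^2 + H3 q" using H3_pos[OF Suc(2)] unfolding q_def r_def .
  have "r^2 \<le> 4" unfolding r_def by (rule H3_le4)
  then have hq: "4*k+1 \<le> H3 q" using Suc(3) h by simp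
  then have "q > 0" by (cases "q = 0") auto
  have IH: "2*3^k \<le> q+1" using Suc(1)[OF \<open>q>0\<close> hq] .
  show ?case
  proof (cases "q + 1 = 2*3^k")
    case True
    then have "q = 2*3^k - 1" by simp
    then have "H3 q = 4*k+1" using H3_c by simp
    then have "r^2 \<ge> 4" using Suc(3) h by simp
    moreover have "r = 0 \<or> r = 1 \<or> r = 2" using r3 by auto
    ultimately have "r = 2" by auto
    then show ?thesis using x True by simp
  next
    case False
    then have "2*3^k \<le> q" using IH by simp
    then show ?thesis using x by simp
  qed
qed

definition P :: "nat \<Rightarrow> nat \<Rightarrow> bool" where
  "P n x \<longleftrightarrow> x > 0 \<and> (H3 ^^ n) x = 1 \<and> (\<forall>j<n. (H3 ^^ j) x \<noteq> 1)"

lemma P_iff: "(x \<ge> 1 \<and> happy3 x \<and> eta3 x = n) \<longleftrightarrow> P n x"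
proof
  assume a: "x \<ge> 1 \<and> happy3 x \<and> eta3 x = n"
  then obtain m where m: "(H3 ^^ m) x = 1" unfolding happy3_def by blast
  have "(H3 ^^ n) x = 1" using a LeastI[of "\<lambda>a. (H3 ^^ a) x = 1", OF m] unfolding eta3_def by simp
  moreover have "\<forall>j<n. (H3 ^^ j) x \<noteq> 1" using a not_less_Least[of _ "\<lambda>a. (H3 ^^ a) x = 1"]
    unfolding eta3_def by blast
  ultimately show "P n x" using a unfolding P_def by simp
next
  assume p: "P n x"
  then have "happy3 x" unfolding P_def happy3_def by blast
  moreover have "eta3 x = n" unfolding eta3_def
    by (rule Least_equality) (use p in \<open>auto simp: P_def not_less[symmetric]\<close>)
  ultimately show "x \<ge> 1 \<and> happy3 x \<and> eta3 x = n" using p unfolding P_def by simp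
qed

lemma gamma3_P: "gamma3 n = (LEAST x. P n x)"
  unfolding gamma3_def P_iff ..

lemma P_Suc: assumes "n \<ge> 1" shows "P (Suc n) x \<longleftrightarrow> x > 0 \<and> P n (H3 x)"
proof
  assume p: "P (Suc n) x"
  then have x0: "x > 0" and h: "(H3 ^^ n) (H3 x) = 1" and j: "\<forall>j<Suc n. (H3 ^^ j) x \<noteq> 1"
    unfolding P_def by (auto simp: funpow_Suc_right simp del: funpow.simps)
  have "H3 x > 0" using H3_zero x0 by (metis gr0I)
  moreover have "\<forall>j<n. (H3 ^^ j) (H3 x) \<noteq> 1"
  proof (intro allI impI)
    fix j assume "j < n"
    then have "Suc j < Suc n" by simp
    then have "(H3 ^^ Suc j) x \<noteq> 1" using j by blast
    then show "(H3 ^^ j) (H3 x) \<noteq> 1" by (simp add: funpow_Suc_right del: funpow.simps)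
  qed
  ultimately show "x > 0 \<and> P n (H3 x)" using x0 h unfolding P_def by simp
next
  assume a: "x > 0 \<and> P n (H3 x)"
  have x1: "x \<noteq> 1"
  proof
    assume "x = 1"
    then have "H3 x = 1" using H3_1 by simp
    then show False using a assms unfolding P_def by auto
  qed
  have "\<forall>j<Suc n. (H3 ^^ j) x \<noteq> 1"
  proof (intro allI impI)
    fix j assume "j < Suc n"
    show "(H3 ^^ j) x \<noteq> 1"
    proof (cases j)
      case 0 then show ?thesis using x1 by simp
    next
      case (Suc i)
      then have "i < n" using \<open>j < Suc n\<close> by simp
      then have "(H3 ^^ i) (H3 x) \<noteq> 1" using a unfolding P_def by blast
      then show ?thesis using Suc by (simp add: funpow_Suc_right del: funpow.simps)
    qed
  qed
  then show "P (Suc n) x" using a unfolding P_def by (simp add: funpow_Suc_right del: funpow.simps)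
qed

lemma step_P:
  assumes n: "n \<ge> 1" and pg: "P n g" and g4: "g mod 4 = 1"
  shows "P (Suc n) (2*3^((g-1) div 4) - 1)"
proof -
  define k where "k = (g-1) div 4"
  have g0: "g > 0" using pg unfolding P_def by simp
  have gk: "g = 4*k+1" unfolding k_def using g0 g4 by presburger
  have c0: "2*3^k - 1 > (0::nat)"
  proof -
    have "(1::nat) \<le> 3^k" by simp
    then show ?thesis by arith
  qed
  show ?thesis
    unfolding P_Suc[OF n] k_def[symmetric] using c0 H3_c[of k] gk pg by simp
qed

lemma step_lemma:
  assumes n: "n \<ge> 1" and pg: "P n g" and mn: "\<And>y. P n y \<Longrightarrow> g \<le> y" and g4: "g mod 4 = 1"
  shows "(LEAST x. P (Suc n) x) = 2*3^((g-1) div 4) - 1"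
proof (rule Least_equality)
  define k where "k = (g-1) div 4"
  have g0: "g > 0" using pg unfolding P_def by simp
  have gk: "g = 4*k+1" unfolding k_def using g0 g4 by presburger
  have c0: "2*3^k - 1 > (0::nat)"
  proof -
    have "(1::nat) \<le> 3^k" by simp
    then show ?thesis by arith
  qed
  show "P (Suc n) (2*3^((g-1) div 4) - 1)"
    unfolding P_Suc[OF n] k_def[symmetric] using c0 H3_c[of k] gk pg by simp
  fix y assume "P (Suc n) y"
  then have y0: "y > 0" and py: "P n (H3 y)" unfolding P_Suc[OF n] by auto
  have "4*k+1 \<le> H3 y" using mn[OF py] gk by simp
  then have "2*3^k \<le> y+1" using H3_lower y0 by blast
  then show "2*3^((g-1) div 4) - 1 \<le> y" unfolding k_def[symmetric] by simp
qed

lemma P2: "P 2 y \<longleftrightarrow> y > 0 \<and> H3 (H3 y) = 1 \<and> y \<noteq> 1 \<and> H3 y \<noteq> 1"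
  unfolding P_def numeral_2_eq_2 by (auto simp: less_Suc_eq)

lemma H3_4: "H3 4 = 2" using H3_pos[of 4] H3_1 by simp
lemma H3_2: "H3 2 = 4" using H3_pos[of 2] by simp
lemma H3_5: "H3 5 = 5" using H3_pos[of 5] H3_1 by simp
lemma H3_8: "H3 8 = 8" using H3_pos[of 8] H3_2 by simp
lemma H3_3: "H3 3 = 1" using H3_pos[of 3] H3_1 by simp

lemma H3_13: "H3 13 = 3" using H3_pos[of 13] H3_4 by simp

lemma P2_13: "P 2 13"
  unfolding P2 using H3_3 H3_13 by simp

lemma gamma2: "gamma3 2 = 13"
  unfolding gamma3_P
proof (rule Least_equality)
  show "P 2 13" by (rule P2_13)
  fix y assume "P 2 y"
  then have a: "y > 0" "H3 (H3 y) = 1" "y \<noteq> 1" "H3 y \<noteq> 1" unfolding P2 by auto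
  show "13 \<le> y"
  proof (rule ccontr)
    assume "\<not> 13 \<le> y"
    then have "y < 13" by simp
    have H6: "H3 6 = 4" using H3_pos[of 6] H3_2 by simp
    have H7: "H3 7 = 5" using H3_pos[of 7] H3_2 H3_1 by simp
    have H9: "H3 9 = 1" using H3_pos[of 9] H3_3 by simp
    have H10: "H3 10 = 2" using H3_pos[of 10] H3_3 by simp
    have H11: "H3 11 = 5" using H3_pos[of 11] H3_3 by simp
    have H12: "H3 12 = 2" using H3_pos[of 12] H3_4 by simp
    then show False using \<open>y < 13\<close> a H3_1 H3_2 H3_3 H3_4 H3_5 H3_8 H6 H7 H9 H10 H11 H12
      by (cases "y = 1 \<or> y = 2 \<or> y = 3 \<or> y = 4 \<or> y = 5 \<or> y = 6 \<or> y = 7 \<or> y = 8 \<or> y = 9 \<or> y = 10 \<or> y = 11 \<or> y = 12") (auto, presburger)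
  qed
qed

lemma main: "n \<ge> 2 \<Longrightarrow> P n (gamma3 n) \<and> gamma3 n mod 4 = 1 \<and>
   gamma3 (Suc n) = 2*3^((gamma3 n - 1) div 4) - 1"
proof (induction n rule: dec_induct)
  case base
  have pg: "P 2 (gamma3 2)"
    unfolding gamma3_P by (rule LeastI[of _ 13]) (rule P2_13)
  moreover have "gamma3 (Suc 2) = 2*3^((gamma3 2 - 1) div 4) - 1"
    unfolding gamma3_P
  proof (rule step_lemma[OF _ pg[unfolded gamma3_P]])
    show "(LEAST x. P 2 x) \<le> y" if "P 2 y" for y using that by (rule Least_le)
    show "(LEAST x. P 2 x) mod 4 = 1" using gamma2 unfolding gamma3_P by simp
  qed simp
  ultimately show ?case using gamma2 by simp
next
  case (step n)
  have n1: "n \<ge> 1" using step by simp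
  have pn: "P (Suc n) (gamma3 (Suc n))"
  proof -
    have "P n (gamma3 n)" using step by simp
    then have "P (Suc n) (2*3^((gamma3 n - 1) div 4) - 1)"
      using step_P[OF n1, of "gamma3 n"] step.IH by simp
    then show ?thesis using step.IH by simp
  qed
  moreover have m4: "gamma3 (Suc n) mod 4 = 1" using step.IH c_mod4 by simp
  moreover have "gamma3 (Suc (Suc n)) = 2*3^((gamma3 (Suc n) - 1) div 4) - 1"
    unfolding gamma3_P[of "Suc (Suc n)"]
  proof (rule step_lemma[OF _ pn])
    show "gamma3 (Suc n) \<le> y" if "P (Suc n) y" for y using that unfolding gamma3_P by (rule Least_le)
  qed (use m4 n1 in simp)+
  ultimately show ?case by simp
qed

theorem lemma5p1:
  shows "gamma3 2 = 13 \<and>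
    (\<forall>\<eta>::nat. \<eta> \<ge> 2 \<longrightarrow>
       real (gamma3 (\<eta> + 1)) = 2 * 3 powr ((real (gamma3 \<eta>) - 1) / 4) - 1)"
proof (intro conjI allI impI)
  show "gamma3 2 = 13" by (rule gamma2)
  fix n :: nat assume "n \<ge> 2"
  from main[OF this] have m: "gamma3 n mod 4 = 1" "gamma3 (Suc n) = 2*3^((gamma3 n - 1) div 4) - 1"
    by auto
  define k where "k = (gamma3 n - 1) div 4"
  have g: "gamma3 n = 4*k+1" unfolding k_def using m(1) by presburger
  have "(1::nat) \<le> 3^k" by simp
  then have "real (2*3^k - 1 :: nat) = 2*3^k - 1" by (simp add: of_nat_diff)
  moreover have "(real (gamma3 n) - 1) / 4 = real k" using g by simp
  ultimately show "real (gamma3 (n + 1)) = 2 * 3 powr ((real (gamma3 n) - 1) / 4) - 1"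
    using m(2) unfolding k_def[symmetric] by (simp add: powr_realpow)
qed

end
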